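(* Let $M$ be an $n\times n$ row-stochastic (transition) matrix whose entries can be computed to arbitrary precision locally, distributed so that machine $i$ holds row $i$. Let $k$ be a power of $2$ with $k=O(n^{c_3})$ for a constant $c_3>0$, and let $\beta=\Omega(n^{-c_4})$ for a constant $c_4>0$. Then in the CongestedClique model one can compute, in $\tilde{O}(n^{\alpha})$ rounds, a matrix $\widehat{M}$ (machine $i$ holding row $i$) with $M^k[i,j]-\beta\le \widehat{M}[i,j]\le M^k[i,j]$ for all $i,j$ (subtractive error at most $\beta$).
   Context: The CongestedClique model: $n$ machines with IDs $1,\dots,n$; computation proceeds in synchronous rounds; in each round every machine performs arbitrary local computation and then sends a possibly different message of $O(\log n)$ bits to every other machine; complexity is the number of rounds. $\alpha$ denotes an exponent such that the product of two $n\times n$ matrices with $O(\log n)$-bit entries, machine $i$ holding row $i$ of each, can be computed (machine $i$ ending with row $i$ of the product) in $O(n^\alpha)$ rounds (currently $\alpha\approx 0.158$). $\tilde{O}(f)=O(f\cdot\mathrm{poly}\log n)$. *)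

theory Defs
  imports Complex_Main
begin

text \<open>Machines have IDs 0..n-1. Since local computation is unrestricted, the state of a
machine is w.l.o.g. its ID, its input and everything it has received so far.
A protocol consists of a message function  msg i x_i h t j  (the message machine i with
input x_i and history h sends to machine j in round t) and an output function
out i x_i h.\<close>

type_synonym cc_hist = "nat \<Rightarrow> nat \<Rightarrow> bool list"
type_synonym 'i cc_msgf = "nat \<Rightarrow> 'i \<Rightarrow> cc_hist \<Rightarrow> nat \<Rightarrow> nat \<Rightarrow> bool list"
type_synonym ('i, 'o) cc_outf = "nat \<Rightarrow> 'i \<Rightarrow> cc_hist \<Rightarrow> 'o"

primrec cc_hist :: "nat \<Rightarrow> 'i cc_msgf \<Rightarrow> (nat \<Rightarrow> 'i) \<Rightarrow> nat \<Rightarrow> nat \<Rightarrow> cc_hist" where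
  "cc_hist n m x 0 = (\<lambda>i s j. [])"
| "cc_hist n m x (Suc t) =
     (\<lambda>i s j. if s < t then cc_hist n m x t i s j
              else if s = t \<and> j < n then m j (x j) (cc_hist n m x t j) t i
              else [])"

definition cc_output :: "nat \<Rightarrow> 'i cc_msgf \<Rightarrow> ('i, 'o) cc_outf \<Rightarrow> (nat \<Rightarrow> 'i) \<Rightarrow> nat \<Rightarrow> nat \<Rightarrow> 'o" where
  "cc_output n m out x T i = out i (x i) (cc_hist n m x T i)"

definition cc_bounded :: "nat \<Rightarrow> 'i cc_msgf \<Rightarrow> bool" where
  "cc_bounded w m \<longleftrightarrow> (\<forall>i xi h t j. length (m i xi h t j) \<le> w)"

definition cc_bw :: "nat \<Rightarrow> nat \<Rightarrow> nat" where
  "cc_bw b n = b * (nat \<lceil>log 2 (real n)\<rceil> + 1)"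

definition mm_exponent :: "real \<Rightarrow> bool" where
  "mm_exponent \<alpha> \<longleftrightarrow>
     (\<forall>c::nat. \<exists>(b::nat) (C::real) (N::nat). \<forall>n\<ge>N.
        \<exists>(T::nat) (m :: ((nat \<Rightarrow> int) \<times> (nat \<Rightarrow> int)) cc_msgf)
          (out :: ((nat \<Rightarrow> int) \<times> (nat \<Rightarrow> int), nat \<Rightarrow> int) cc_outf).
          real T \<le> C * real n powr \<alpha> \<and> cc_bounded (cc_bw b n) m \<and>
          (\<forall>A B :: nat \<Rightarrow> nat \<Rightarrow> int.
             (\<forall>i<n. \<forall>j<n. \<bar>A i j\<bar> \<le> int n ^ c \<and> \<bar>B i j\<bar> \<le> int n ^ c) \<longrightarrow>
             (\<forall>i<n. \<forall>j<n. cc_output n m out (\<lambda>l. (A l, B l)) T i j = (\<Sum>l<n. A i l * B l j))))"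

definition row_stochastic :: "nat \<Rightarrow> (nat \<Rightarrow> nat \<Rightarrow> real) \<Rightarrow> bool" where
  "row_stochastic n M \<longleftrightarrow> (\<forall>i<n. (\<forall>j<n. 0 \<le> M i j) \<and> (\<Sum>j<n. M i j) = 1)"

primrec mat_pow :: "nat \<Rightarrow> (nat \<Rightarrow> nat \<Rightarrow> real) \<Rightarrow> nat \<Rightarrow> nat \<Rightarrow> nat \<Rightarrow> real" where
  "mat_pow n M 0 = (\<lambda>i j. if i = j then 1 else 0)"
| "mat_pow n M (Suc k) = (\<lambda>i j. \<Sum>l<n. mat_pow n M k i l * M l j)"

end

theory Submission
  imports Defs
begin


lemma cc_hist_eq:
  "cc_hist n m x t i s j = (if s < t \<and> j < n then m j (x j) (cc_hist n m x s j) s i else [])"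
  by (induction t arbitrary: i s j) auto

lemma cc_hist_stable:
  "s < t \<Longrightarrow> s < t' \<Longrightarrow> cc_hist n m x t i s = cc_hist n m x t' i s"
  by (rule ext) (simp add: cc_hist_eq)

definition shift :: "nat \<Rightarrow> cc_hist \<Rightarrow> nat \<Rightarrow> nat \<Rightarrow> cc_hist" where
  "shift T0 h p r = (\<lambda>r' j. if r' < r then h (p*T0 + r') j else [])"

primrec curst :: "nat \<Rightarrow> ('a,'o) cc_outf \<Rightarrow> (nat \<Rightarrow> 'i \<Rightarrow> 'a) \<Rightarrow> (nat \<Rightarrow> 'o \<Rightarrow> 'a)
   \<Rightarrow> nat \<Rightarrow> 'i \<Rightarrow> cc_hist \<Rightarrow> nat \<Rightarrow> 'a" where
  "curst T0 out0 init step i xi h 0 = init i xi"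
| "curst T0 out0 init step i xi h (Suc p) =
     step i (out0 i (curst T0 out0 init step i xi h p) (shift T0 h p T0))"

definition cmsg :: "nat \<Rightarrow> 'a cc_msgf \<Rightarrow> ('a,'o) cc_outf \<Rightarrow> (nat \<Rightarrow> 'i \<Rightarrow> 'a)
   \<Rightarrow> (nat \<Rightarrow> 'o \<Rightarrow> 'a) \<Rightarrow> 'i cc_msgf" where
  "cmsg T0 m0 out0 init step i xi h s j =
     m0 i (curst T0 out0 init step i xi h (s div T0)) (shift T0 h (s div T0) (s mod T0)) (s mod T0) j"

lemma curst_cong:
  "(\<forall>s<p*T0. h s = h' s) \<Longrightarrow> curst T0 out0 init step i xi h p = curst T0 out0 init step i xi h' p"
proof (induction p)
  case 0 then show ?case by simp
next
  case (Suc p)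
  have "\<forall>s<p*T0. h s = h' s" using Suc.prems by (auto simp del: mult_Suc) (meson less_le_trans mult_le_mono1 le_Suc_eq less_or_eq_imp_le)
  moreover have "shift T0 h p T0 = shift T0 h' p T0"
    unfolding shift_def using Suc.prems by (auto intro!: ext)
  ultimately show ?case using Suc.IH by simp
qed

lemma cmsg_bounded: "cc_bounded w m0 \<Longrightarrow> cc_bounded w (cmsg T0 m0 out0 init step)"
  unfolding cc_bounded_def cmsg_def by blast

definition Ys where
  "Ys n T0 m0 out0 init step x p j =
     curst T0 out0 init step j (x j) (cc_hist n (cmsg T0 m0 out0 init step) x (p*T0) j) p"

lemma curst_H:
  assumes "p*T0 \<le> t"
  shows "curst T0 out0 init step i (x i) (cc_hist n (cmsg T0 m0 out0 init step) x t i) p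
       = Ys n T0 m0 out0 init step x p i"
  unfolding Ys_def
  by (rule curst_cong) (use assms in \<open>auto intro: cc_hist_stable\<close>)

lemma shift_H:
  assumes "r \<le> T0"
  shows "shift T0 (cc_hist n (cmsg T0 m0 out0 init step) x (p*T0+r) i) p r
       = cc_hist n m0 (Ys n T0 m0 out0 init step x p) r i"
  using assms
proof (induction r arbitrary: i rule: less_induct)
  case (less r)
  show ?case
  proof (rule ext, rule ext)
    fix r' j
    show "shift T0 (cc_hist n (cmsg T0 m0 out0 init step) x (p*T0+r) i) p r r' j
       = cc_hist n m0 (Ys n T0 m0 out0 init step x p) r i r' j"
    proof (cases "r' < r \<and> j < n")
      case True
      then have r'T: "r' < T0" using less.prems by simp
      have d: "(p*T0+r') div T0 = p" and md: "(p*T0+r') mod T0 = r'" using r'T by auto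
      have IH: "shift T0 (cc_hist n (cmsg T0 m0 out0 init step) x (p*T0+r') j) p r'
         = cc_hist n m0 (Ys n T0 m0 out0 init step x p) r' j"
        using less.IH[of r' j] True r'T by simp
      have c: "curst T0 out0 init step j (x j) (cc_hist n (cmsg T0 m0 out0 init step) x (p*T0+r') j) p
          = Ys n T0 m0 out0 init step x p j"
        by (rule curst_H) simp
      have "shift T0 (cc_hist n (cmsg T0 m0 out0 init step) x (p*T0+r) i) p r r' j
          = cmsg T0 m0 out0 init step j (x j) (cc_hist n (cmsg T0 m0 out0 init step) x (p*T0+r') j) (p*T0+r') i"
        using True by (simp add: shift_def cc_hist_eq[of n "cmsg T0 m0 out0 init step"])
      also have "\<dots> = m0 j (Ys n T0 m0 out0 init step x p j) (cc_hist n m0 (Ys n T0 m0 out0 init step x p) r' j) r' i"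
        unfolding cmsg_def d md IH c ..
      also have "\<dots> = cc_hist n m0 (Ys n T0 m0 out0 init step x p) r i r' j"
        using True by (simp add: cc_hist_eq[of n m0 _ r])
      finally show ?thesis .
    next
      case False
      then show ?thesis
        by (auto simp add: shift_def cc_hist_eq[of n "cmsg T0 m0 out0 init step"] cc_hist_eq[of n m0])
    qed
  qed
qed

lemma Ys_0: "Ys n T0 m0 out0 init step x 0 i = init i (x i)"
  by (simp add: Ys_def)

lemma Ys_Suc: "Ys n T0 m0 out0 init step x (Suc p) i =
   step i (out0 i (Ys n T0 m0 out0 init step x p i) (cc_hist n m0 (Ys n T0 m0 out0 init step x p) T0 i))"
proof -
  have e: "Suc p * T0 = p*T0 + T0" by simp
  have "Ys n T0 m0 out0 init step x (Suc p) i = step i (out0 i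
     (curst T0 out0 init step i (x i) (cc_hist n (cmsg T0 m0 out0 init step) x (p*T0+T0) i) p)
     (shift T0 (cc_hist n (cmsg T0 m0 out0 init step) x (p*T0+T0) i) p T0))"
    by (simp only: Ys_def e curst.simps)
  also have "\<dots> = step i (out0 i (Ys n T0 m0 out0 init step x p i) (cc_hist n m0 (Ys n T0 m0 out0 init step x p) T0 i))"
    by (simp add: curst_H shift_H)
  finally show ?thesis .
qed




lemma mat_pow_add:
  assumes "j < n"
  shows "mat_pow n M (a + b) i j = (\<Sum>l<n. mat_pow n M a i l * mat_pow n M b l j)"
  using assms
proof (induction b arbitrary: j)
  case 0
  have "(\<Sum>l<n. mat_pow n M a i l * (if l = j then 1 else 0)) = mat_pow n M a i j"
    using 0 by (simp add: sum.delta' if_distrib cong: if_cong)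
  then show ?case by simp
next
  case (Suc b)
  have "mat_pow n M (a + Suc b) i j = (\<Sum>l<n. mat_pow n M (a+b) i l * M l j)" by simp
  also have "\<dots> = (\<Sum>l<n. (\<Sum>l'<n. mat_pow n M a i l' * mat_pow n M b l' l) * M l j)"
    using Suc.IH by simp
  also have "\<dots> = (\<Sum>l'<n. mat_pow n M a i l' * (\<Sum>l<n. mat_pow n M b l' l * M l j))"
    by (simp add: sum_distrib_left sum_distrib_right mult.assoc) (rule sum.swap)
  finally show ?case by simp
qed

lemma mat_pow_stoch:
  assumes "row_stochastic n M"
  shows "\<forall>i<n. (\<forall>j<n. 0 \<le> mat_pow n M k i j) \<and> (\<Sum>j<n. mat_pow n M k i j) = 1"
proof (induction k)
  case 0 then show ?case by (simp add: sum.delta')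
next
  case (Suc k)
  show ?case
  proof (intro allI impI conjI)
    fix i j assume "i < n" "j < n"
    then show "0 \<le> mat_pow n M (Suc k) i j"
      using Suc assms unfolding row_stochastic_def by (auto intro!: sum_nonneg)
  next
    fix i assume i: "i < n"
    have "(\<Sum>j<n. mat_pow n M (Suc k) i j) = (\<Sum>l<n. mat_pow n M k i l * (\<Sum>j<n. M l j))"
      by (simp add: sum_distrib_left) (rule sum.swap)
    also have "\<dots> = (\<Sum>l<n. mat_pow n M k i l)"
      using assms unfolding row_stochastic_def by simp
    finally show "(\<Sum>j<n. mat_pow n M (Suc k) i j) = 1" using Suc i by simp
  qed
qed

lemma sq_step:
  fixes P Q Q' :: "nat \<Rightarrow> nat \<Rightarrow> real"
  assumes P: "\<forall>i<n. (\<forall>j<n. 0 \<le> P i j) \<and> (\<Sum>j<n. P i j) = 1"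
    and Q: "\<forall>i<n. \<forall>j<n. 0 \<le> Q i j \<and> Q i j \<le> P i j"
    and E: "\<forall>i<n. (\<Sum>j<n. P i j - Q i j) \<le> \<epsilon>"
    and Q': "\<forall>i<n. \<forall>j<n. (\<Sum>l<n. Q i l * Q l j) - \<delta> \<le> Q' i j \<and> Q' i j \<le> (\<Sum>l<n. Q i l * Q l j)"
  shows "\<forall>i<n. \<forall>j<n. Q' i j \<le> (\<Sum>l<n. P i l * P l j)"
    and "\<forall>i<n. (\<Sum>j<n. (\<Sum>l<n. P i l * P l j) - Q' i j) \<le> 2*\<epsilon> + real n*\<delta>"
proof -
  show "\<forall>i<n. \<forall>j<n. Q' i j \<le> (\<Sum>l<n. P i l * P l j)"
  proof (intro allI impI)
    fix i j assume "i<n" "j<n"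
    have "(\<Sum>l<n. Q i l * Q l j) \<le> (\<Sum>l<n. P i l * P l j)"
      using Q \<open>i<n\<close> \<open>j<n\<close> by (intro sum_mono mult_mono) (auto intro: order_trans)
    then show "Q' i j \<le> (\<Sum>l<n. P i l * P l j)" using Q' \<open>i<n\<close> \<open>j<n\<close> by force
  qed
  show "\<forall>i<n. (\<Sum>j<n. (\<Sum>l<n. P i l * P l j) - Q' i j) \<le> 2*\<epsilon> + real n*\<delta>"
  proof (intro allI impI)
    fix i assume i: "i<n"
    have QS: "(\<Sum>j<n. Q l j) \<le> 1" if "l<n" for l
    proof -
      have "(\<Sum>j<n. Q l j) \<le> (\<Sum>j<n. P l j)" using Q that by (intro sum_mono) auto
      then show ?thesis using P that by simp
    qed
    have "(\<Sum>j<n. (\<Sum>l<n. P i l * P l j) - Q' i j) \<le> (\<Sum>j<n. (\<Sum>l<n. P i l * P l j) - (\<Sum>l<n. Q i l * Q l j) + \<delta>)"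
      using Q' i by (intro sum_mono) force
    also have "\<dots> = (\<Sum>j<n. \<Sum>l<n. P i l * (P l j - Q l j) + (P i l - Q i l) * Q l j) + real n * \<delta>"
      by (simp add: sum.distrib sum_subtractf algebra_simps)
    also have "(\<Sum>j<n. \<Sum>l<n. P i l * (P l j - Q l j) + (P i l - Q i l) * Q l j)
       = (\<Sum>l<n. P i l * (\<Sum>j<n. P l j - Q l j)) + (\<Sum>l<n. (P i l - Q i l) * (\<Sum>j<n. Q l j))"
      by (subst sum.swap) (simp add: sum.distrib sum_distrib_left)
    also have "(\<Sum>l<n. P i l * (\<Sum>j<n. P l j - Q l j)) \<le> (\<Sum>l<n. P i l * \<epsilon>)"
      using P E i by (intro sum_mono mult_left_mono) auto
    also have "(\<Sum>l<n. P i l * \<epsilon>) = \<epsilon>" using P i by (simp add: sum_distrib_right[symmetric])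
    also have "(\<Sum>l<n. (P i l - Q i l) * (\<Sum>j<n. Q l j)) \<le> (\<Sum>l<n. (P i l - Q i l) * 1)"
      using Q QS i by (intro sum_mono mult_left_mono) auto
    also have "\<dots> \<le> \<epsilon>" using E i by simp
    finally show "(\<Sum>j<n. (\<Sum>l<n. P i l * P l j) - Q' i j) \<le> 2*\<epsilon> + real n*\<delta>" by simp
  qed
qed




lemma div_bounds:
  fixes S N :: int assumes "N > 0"
  shows "real_of_int S / N - 1 \<le> real_of_int (S div N)" "real_of_int (S div N) \<le> real_of_int S / N"
proof -
  have e: "S div N = \<lfloor>real_of_int S / real_of_int N\<rfloor>" by (simp add: floor_divide_of_int_eq)
  show "real_of_int S / N - 1 \<le> real_of_int (S div N)" unfolding e by linarith
  show "real_of_int (S div N) \<le> real_of_int S / N" unfolding e by linarith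
qed

lemma mat_pow_1: "i < n \<Longrightarrow> j < n \<Longrightarrow> mat_pow n M 1 i j = M i j"
proof -
  assume a: "i < n" "j < n"
  have "mat_pow n M 1 i j = (\<Sum>l<n. (if i = l then 1 else 0) * M l j)" by simp
  also have "\<dots> = (\<Sum>l<n. if i = l then M l j else 0)" by (rule sum.cong) auto
  also have "\<dots> = M i j" using a by (simp add: sum.delta)
  finally show ?thesis .
qed

lemma algo_correct:
  fixes M :: "nat \<Rightarrow> nat \<Rightarrow> real"
  assumes mm: "\<forall>A B :: nat \<Rightarrow> nat \<Rightarrow> int.
             (\<forall>i<n. \<forall>j<n. \<bar>A i j\<bar> \<le> int n ^ c \<and> \<bar>B i j\<bar> \<le> int n ^ c) \<longrightarrow>
             (\<forall>i<n. \<forall>j<n. cc_output n m0 out0 (\<lambda>l. (A l, B l)) T0 i j = (\<Sum>l<n. A i l * B l j))"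
    and n: "n > 0" and M: "row_stochastic n M"
  defines "init \<equiv> (\<lambda>(i::nat) (xi::nat \<Rightarrow> real). (\<lambda>j. \<lfloor>xi j * real n ^ c\<rfloor>, \<lambda>j. \<lfloor>xi j * real n ^ c\<rfloor>))"
    and "step \<equiv> (\<lambda>(i::nat) (ov::nat \<Rightarrow> int). (\<lambda>j. ov j div int n ^ c, \<lambda>j. ov j div int n ^ c))"
  defines "Q \<equiv> (\<lambda>p i j. real_of_int (fst (Ys n T0 m0 out0 init step M p i) j) / real n ^ c)"
  shows "(\<forall>i<n. \<forall>j<n. 0 \<le> Q p i j \<and> Q p i j \<le> mat_pow n M (2^p) i j) \<and>
         (\<forall>i<n. (\<Sum>j<n. mat_pow n M (2^p) i j - Q p i j) \<le> (2^(p+1) - 1) * real n / real n ^ c)"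
proof -
  define nc where "nc = real n ^ c"
  define Ni where "Ni = int n ^ c"
  have nc0: "nc > 0" and Ni0: "Ni > 0" using n by (auto simp: nc_def Ni_def)
  have ncNi: "nc = real_of_int Ni" by (simp add: nc_def Ni_def)
  define A where "A = (\<lambda>p l. fst (Ys n T0 m0 out0 init step M p l))"
  have Yeq: "Ys n T0 m0 out0 init step M p = (\<lambda>l. (A p l, A p l))" for p
  proof (rule ext)
    fix l show "Ys n T0 m0 out0 init step M p l = (A p l, A p l)"
      unfolding A_def by (cases p) (simp_all add: Ys_0 Ys_Suc init_def step_def)
  qed
  have QA: "Q p i j = real_of_int (A p i j) / nc" for p i j by (simp add: Q_def A_def nc_def)
  have Pst: "\<forall>i<n. (\<forall>j<n. 0 \<le> mat_pow n M k i j) \<and> (\<Sum>j<n. mat_pow n M k i j) = 1" for k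
    using mat_pow_stoch[OF M] .
  have Ple1: "mat_pow n M k i j \<le> 1" if "i<n" "j<n" for k i j
  proof -
    have "mat_pow n M k i j \<le> (\<Sum>j<n. mat_pow n M k i j)"
      using Pst[of k] that by (intro member_le_sum) auto
    then show ?thesis using Pst[of k] that by simp
  qed
  show ?thesis
  proof (induction p)
    case 0
    have A0: "A 0 i j = \<lfloor>M i j * nc\<rfloor>" for i j
      by (simp add: A_def Ys_0 init_def nc_def)
    have b: "0 \<le> Q 0 i j \<and> Q 0 i j \<le> M i j \<and> M i j - Q 0 i j \<le> 1 / nc" if "i<n" "j<n" for i j
    proof -
      have M0: "0 \<le> M i j" using M that by (simp add: row_stochastic_def)
      have f1: "real_of_int \<lfloor>M i j * nc\<rfloor> \<le> M i j * nc" by simp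
      have f2: "M i j * nc - 1 \<le> real_of_int \<lfloor>M i j * nc\<rfloor>" by linarith
      have f3: "0 \<le> real_of_int \<lfloor>M i j * nc\<rfloor>" using M0 nc0 by simp
      have e1: "0 \<le> real_of_int \<lfloor>M i j * nc\<rfloor> / nc" using f3 nc0 by simp
      have e2: "real_of_int \<lfloor>M i j * nc\<rfloor> / nc \<le> M i j" using f1 nc0 by (simp add: divide_le_eq)
      have "M i j - real_of_int \<lfloor>M i j * nc\<rfloor> / nc = (M i j * nc - real_of_int \<lfloor>M i j * nc\<rfloor>) / nc"
        using nc0 by (simp add: field_simps)
      also have "\<dots> \<le> 1 / nc" using f2 nc0 by (intro divide_right_mono) linarith+
      finally show ?thesis unfolding QA A0 using e1 e2 by simp
    qed
    show ?case
    proof (intro conjI allI impI)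
      fix i j assume "i<n" "j<n"
      then show "0 \<le> Q 0 i j" "Q 0 i j \<le> mat_pow n M (2^0) i j" using b mat_pow_1 by auto
    next
      fix i assume i: "i<n"
      have "(\<Sum>j<n. mat_pow n M (2^0) i j - Q 0 i j) \<le> (\<Sum>j<n. 1/nc)"
        using b mat_pow_1 i by (intro sum_mono) auto
      then show "(\<Sum>j<n. mat_pow n M (2^0) i j - Q 0 i j) \<le> (2^(0+1) - 1) * real n / real n ^ c"
        by (simp add: nc_def)
    qed
  next
    case (Suc p)
    have bnd: "\<forall>i<n. \<forall>j<n. \<bar>A p i j\<bar> \<le> Ni \<and> \<bar>A p i j\<bar> \<le> Ni"
    proof (intro allI impI)
      fix i j assume ij: "i<n" "j<n"
      have "0 \<le> Q p i j" "Q p i j \<le> 1" proof -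
        have "0 \<le> Q p i j \<and> Q p i j \<le> mat_pow n M (2^p) i j" using Suc.IH ij by blast
        then show "0 \<le> Q p i j" "Q p i j \<le> 1" using Ple1[OF ij, of "2^p"] by linarith+
      qed
      then have "0 \<le> real_of_int (A p i j)" "real_of_int (A p i j) \<le> real_of_int Ni"
      proof -
        have "0 \<le> real_of_int (A p i j) / nc" "real_of_int (A p i j) / nc \<le> 1"
          using \<open>0 \<le> Q p i j\<close> \<open>Q p i j \<le> 1\<close> unfolding QA by auto
        then show "0 \<le> real_of_int (A p i j)" "real_of_int (A p i j) \<le> real_of_int Ni"
          using nc0 unfolding ncNi by (simp_all add: zero_le_divide_iff divide_le_eq_1)
      qed
      then show "\<bar>A p i j\<bar> \<le> Ni \<and> \<bar>A p i j\<bar> \<le> Ni" by linarith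
    qed
    have outeq: "cc_output n m0 out0 (\<lambda>l. (A p l, A p l)) T0 i j = (\<Sum>l<n. A p i l * A p l j)"
      if "i<n" "j<n" for i j
    proof -
      have "(\<forall>i<n. \<forall>j<n. \<bar>A p i j\<bar> \<le> int n ^ c \<and> \<bar>A p i j\<bar> \<le> int n ^ c) \<longrightarrow>
             (\<forall>i<n. \<forall>j<n. cc_output n m0 out0 (\<lambda>l. (A p l, A p l)) T0 i j = (\<Sum>l<n. A p i l * A p l j))"
        by (rule spec[OF spec[OF mm, of "A p"], of "A p"])
      then show ?thesis using bnd that unfolding Ni_def by blast
    qed
    have ASuc: "A (Suc p) i j = (\<Sum>l<n. A p i l * A p l j) div Ni" if "i<n" "j<n" for i j
    proof -
      have "Ys n T0 m0 out0 init step M (Suc p) i = step i (cc_output n m0 out0 (\<lambda>l. (A p l, A p l)) T0 i)"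
        unfolding Ys_Suc cc_output_def Yeq[of p] by simp
      then have "A (Suc p) i j = fst (step i (cc_output n m0 out0 (\<lambda>l. (A p l, A p l)) T0 i)) j"
        unfolding A_def by simp
      then show ?thesis using outeq[OF that] by (simp add: step_def Ni_def)
    qed
    have Anneg: "0 \<le> A p i j" if "i<n" "j<n" for i j
      using Suc.IH that nc0 unfolding QA by (simp add: zero_le_divide_iff)
    have Q': "\<forall>i<n. \<forall>j<n. (\<Sum>l<n. Q p i l * Q p l j) - 1/nc \<le> Q (Suc p) i j \<and>
                Q (Suc p) i j \<le> (\<Sum>l<n. Q p i l * Q p l j)"
    proof (intro allI impI)
      fix i j assume ij: "i<n" "j<n"
      define S where "S = (\<Sum>l<n. A p i l * A p l j)"
      have QQ: "(\<Sum>l<n. Q p i l * Q p l j) = real_of_int S / nc / nc"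
        unfolding S_def QA by (simp add: sum_divide_distrib[symmetric] field_simps)
      have QS: "Q (Suc p) i j = real_of_int (S div Ni) / nc" unfolding QA ASuc[OF ij] S_def ..
      have d1: "real_of_int S / Ni - 1 \<le> real_of_int (S div Ni)"
        and d2: "real_of_int (S div Ni) \<le> real_of_int S / Ni" using div_bounds[OF Ni0] by auto
      show "(\<Sum>l<n. Q p i l * Q p l j) - 1/nc \<le> Q (Suc p) i j \<and> Q (Suc p) i j \<le> (\<Sum>l<n. Q p i l * Q p l j)"
      proof
        have "real_of_int S/nc/nc - 1/nc = (real_of_int S/nc - 1)/nc" by (simp add: diff_divide_distrib)
        also have "\<dots> \<le> real_of_int (S div Ni) / nc"
          using d1 nc0 unfolding ncNi by (intro divide_right_mono) auto
        finally show "(\<Sum>l<n. Q p i l * Q p l j) - 1/nc \<le> Q (Suc p) i j" unfolding QQ QS .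
        show "Q (Suc p) i j \<le> (\<Sum>l<n. Q p i l * Q p l j)"
          unfolding QQ QS using d2 nc0 unfolding ncNi by (intro divide_right_mono) auto
      qed
    qed
    have QSnn: "0 \<le> Q (Suc p) i j" if "i<n" "j<n" for i j
    proof -
      have "0 \<le> (\<Sum>l<n. A p i l * A p l j)" using Anneg that by (intro sum_nonneg) auto
      then have "0 \<le> A (Suc p) i j" using ASuc[OF that] Ni0 by (simp add: pos_imp_zdiv_nonneg_iff)
      then show ?thesis using nc0 unfolding QA by simp
    qed
    have PP: "mat_pow n M (2^Suc p) i j = (\<Sum>l<n. mat_pow n M (2^p) i l * mat_pow n M (2^p) l j)"
      if "j<n" for i j
      using mat_pow_add[OF that, of M "2^p" "2^p" i] by (simp add: mult_2)
    note ss = sq_step[OF Pst[of "2^p"], where Q="Q p" and \<epsilon>="(2^(p+1) - 1) * real n / real n ^ c" and Q'="Q (Suc p)" and \<delta>="1/nc"]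
    have h1: "\<forall>i<n. \<forall>j<n. 0 \<le> Q p i j \<and> Q p i j \<le> mat_pow n M (2^p) i j" using Suc.IH by blast
    have h2: "\<forall>i<n. (\<Sum>j<n. mat_pow n M (2^p) i j - Q p i j) \<le> (2^(p+1) - 1) * real n / real n ^ c"
      using Suc.IH by blast
    show ?case
    proof (intro conjI allI impI)
      fix i j assume ij: "i<n" "j<n"
      show "0 \<le> Q (Suc p) i j" using QSnn ij .
      show "Q (Suc p) i j \<le> mat_pow n M (2^Suc p) i j" using ss(1)[OF h1 h2 Q'] ij PP by simp
    next
      fix i assume i: "i<n"
      have "(\<Sum>j<n. mat_pow n M (2^Suc p) i j - Q (Suc p) i j)
          = (\<Sum>j<n. (\<Sum>l<n. mat_pow n M (2^p) i l * mat_pow n M (2^p) l j) - Q (Suc p) i j)"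
        using PP by simp
      also have "\<dots> \<le> 2 * ((2^(p+1) - 1) * real n / real n ^ c) + real n * (1/nc)"
        using ss(2)[OF h1 h2 Q'] i by blast
      also have "\<dots> = (2^(Suc p+1) - 1) * real n / real n ^ c"
        by (simp add: nc_def add_divide_distrib[symmetric] algebra_simps)
      finally show "(\<Sum>j<n. mat_pow n M (2^Suc p) i j - Q (Suc p) i j) \<le> (2^(Suc p+1) - 1) * real n / real n ^ c" .
    qed
  qed
qed




lemma ln_ge1: "3 \<le> x \<Longrightarrow> 1 \<le> ln (x::real)"
proof -
  assume "3 \<le> x"
  moreover have "exp 1 \<le> (3::real)" using exp_le by simp
  ultimately have "exp 1 \<le> x" by linarith
  then have "ln (exp 1) \<le> ln x" using \<open>3 \<le> x\<close> by (subst ln_le_cancel_iff) auto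
  then show ?thesis by simp
qed

lemma nat_floor_le_max: "real (nat \<lfloor>x\<rfloor>) \<le> max 0 x"
  by (cases "x \<ge> 0") auto

lemma final_ineq:
  fixes n :: nat and c :: nat and k :: nat and c3 c4 C3 C4 \<beta> :: real
  assumes n3: "3 \<le> n" and nC: "2*C3/C4 \<le> real n" and C3: "C3 > 0" and C4: "C4 > 0"
    and c: "real c \<ge> c3 + c4 + 2"
    and k: "real k \<le> C3 * real n powr c3" and \<beta>: "\<beta> \<ge> C4 * real n powr (- c4)"
  shows "2 * real k * real n / real n ^ c \<le> \<beta>"
proof -
  have n0: "real n > 0" using n3 by simp
  have nc: "real n ^ c = real n powr real c" using n0 by (simp add: powr_realpow)
  have "2 * real k * real n / real n ^ c \<le> 2 * (C3 * real n powr c3) * real n / real n ^ c"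
    using k n0 by (intro divide_right_mono mult_right_mono mult_left_mono) auto
  also have "\<dots> = 2 * C3 * real n powr (c3 + 1 - real c)"
    unfolding nc using n0 by (simp add: powr_add powr_diff)
  also have "\<dots> \<le> 2 * C3 * real n powr (- c4 - 1)"
    using c n3 C3 by (intro mult_left_mono powr_mono) auto
  also have "\<dots> = (2 * C3 / real n) * real n powr (- c4)"
    using n0 by (simp add: powr_diff powr_minus divide_simps)
  also have "\<dots> \<le> C4 * real n powr (- c4)"
  proof (rule mult_right_mono)
    show "2 * C3 / real n \<le> C4" using nC C4 n0 by (simp add: divide_le_eq field_simps)
  qed simp
  also have "\<dots> \<le> \<beta>" using \<beta> .
  finally show ?thesis .
qed

theorem mainTheorem8:
  fixes \<alpha> c3 c4 C3 C4 :: real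
  assumes "mm_exponent \<alpha>"
    and "c3 > 0" and "c4 > 0" and "C3 > 0" and "C4 > 0"
  shows "\<exists>(b::nat) (d::nat) (C::real) (N::nat). \<forall>n\<ge>N. \<exists>T::nat.
           real T \<le> C * real n powr \<alpha> * (ln (real n)) ^ d \<and>
           (\<forall>(k::nat) (\<beta>::real).
              (\<exists>e. k = 2 ^ e) \<and> real k \<le> C3 * real n powr c3 \<and> \<beta> \<ge> C4 * real n powr (- c4) \<longrightarrow>
              (\<exists>(m :: (nat \<Rightarrow> real) cc_msgf) (out :: (nat \<Rightarrow> real, nat \<Rightarrow> real) cc_outf).
                 cc_bounded (cc_bw b n) m \<and>
                 (\<forall>M. row_stochastic n M \<longrightarrow>
                    (\<forall>i<n. \<forall>j<n.
                       mat_pow n M k i j - \<beta> \<le> cc_output n m out M T i j \<and>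
                       cc_output n m out M T i j \<le> mat_pow n M k i j))))"
proof -
  define c :: nat where "c = nat \<lceil>c3 + c4\<rceil> + 2"
  have creal: "real c \<ge> c3 + c4 + 2" unfolding c_def by linarith
  obtain b Cm Nm where H: "\<forall>n\<ge>Nm.
        \<exists>(T::nat) (m :: ((nat \<Rightarrow> int) \<times> (nat \<Rightarrow> int)) cc_msgf)
          (out :: ((nat \<Rightarrow> int) \<times> (nat \<Rightarrow> int), nat \<Rightarrow> int) cc_outf).
          real T \<le> Cm * real n powr \<alpha> \<and> cc_bounded (cc_bw b n) m \<and>
          (\<forall>A B :: nat \<Rightarrow> nat \<Rightarrow> int.
             (\<forall>i<n. \<forall>j<n. \<bar>A i j\<bar> \<le> int n ^ c \<and> \<bar>B i j\<bar> \<le> int n ^ c) \<longrightarrow>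
             (\<forall>i<n. \<forall>j<n. cc_output n m out (\<lambda>l. (A l, B l)) T i j = (\<Sum>l<n. A i l * B l j)))"
    using assms(1) unfolding mm_exponent_def by (rule allE[where x=c]) (elim exE, assumption)
  define K where "K = \<bar>log 2 C3\<bar> + c3 / ln 2"
  define N where "N = max Nm (nat \<lceil>2*C3/C4\<rceil> + 3)"
  show ?thesis
  proof (rule exI[of _ b], rule exI[of _ "1::nat"], rule exI[of _ "\<bar>Cm\<bar> * K"], rule exI[of _ N], intro allI impI)
    fix n assume nN: "N \<le> n"
    have n3: "3 \<le> n" and nNm: "Nm \<le> n" using nN unfolding N_def by auto
    have nC: "2*C3/C4 \<le> real n" using nN unfolding N_def by linarith
    have n0: "real n > 0" using n3 by simp
    obtain T0 m0 out0 where T0: "real T0 \<le> Cm * real n powr \<alpha>" and bd: "cc_bounded (cc_bw b n) m0"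
      and mm: "\<forall>A B :: nat \<Rightarrow> nat \<Rightarrow> int.
             (\<forall>i<n. \<forall>j<n. \<bar>A i j\<bar> \<le> int n ^ c \<and> \<bar>B i j\<bar> \<le> int n ^ c) \<longrightarrow>
             (\<forall>i<n. \<forall>j<n. cc_output n m0 out0 (\<lambda>l. (A l, B l)) T0 i j = (\<Sum>l<n. A i l * B l j))"
      using H[rule_format, OF nNm] by (elim exE conjE) (rule that)
    define Emax where "Emax = nat \<lfloor>log 2 (C3 * real n powr c3)\<rfloor>"
    have lnn: "1 \<le> ln (real n)" using n3 by (intro ln_ge1) simp
    have logeq: "log 2 (C3 * real n powr c3) = log 2 C3 + c3 * (ln (real n) / ln 2)"
    proof -
      have "log 2 (C3 * real n powr c3) = log 2 C3 + log 2 (real n powr c3)"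
        using assms(4) n0 by (intro log_mult_pos) auto
      also have "log 2 (real n powr c3) = c3 * log 2 (real n)" by (rule log_powr)
      finally show ?thesis by (simp add: log_def)
    qed
    have Ebound: "real Emax \<le> K * ln (real n)"
    proof -
      have a: "log 2 C3 \<le> \<bar>log 2 C3\<bar> * ln (real n)"
      proof -
        have "\<bar>log 2 C3\<bar> * 1 \<le> \<bar>log 2 C3\<bar> * ln (real n)" by (rule mult_left_mono[OF lnn]) simp
        then show ?thesis by linarith
      qed
      have "c3 * (ln (real n) / ln 2) = c3 / ln 2 * ln (real n)" by simp
      then have "log 2 (C3 * real n powr c3) \<le> K * ln (real n)"
        unfolding logeq K_def using a by (simp add: distrib_right)
      moreover have "0 \<le> K * ln (real n)" unfolding K_def using assms(2) lnn by simp
      ultimately show ?thesis unfolding Emax_def using nat_floor_le_max[of "log 2 (C3 * real n powr c3)"]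
        by linarith
    qed
    have T0': "real T0 \<le> \<bar>Cm\<bar> * real n powr \<alpha>"
      using T0 mult_right_mono[OF abs_ge_self powr_ge_zero, of Cm "real n" \<alpha>] by linarith
    have Tb: "real (Emax * T0) \<le> (\<bar>Cm\<bar> * K) * real n powr \<alpha> * (ln (real n)) ^ 1"
    proof -
      have "real (Emax * T0) = real Emax * real T0" by simp
      also have "\<dots> \<le> (K * ln (real n)) * (\<bar>Cm\<bar> * real n powr \<alpha>)"
        using Ebound T0' by (intro mult_mono) auto
      finally show ?thesis by (simp add: algebra_simps)
    qed
    show "\<exists>T::nat.
           real T \<le> (\<bar>Cm\<bar> * K) * real n powr \<alpha> * (ln (real n)) ^ 1 \<and>
           (\<forall>(k::nat) (\<beta>::real).
              (\<exists>e. k = 2 ^ e) \<and> real k \<le> C3 * real n powr c3 \<and> \<beta> \<ge> C4 * real n powr (- c4) \<longrightarrow>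
              (\<exists>(m :: (nat \<Rightarrow> real) cc_msgf) (out :: (nat \<Rightarrow> real, nat \<Rightarrow> real) cc_outf).
                 cc_bounded (cc_bw b n) m \<and>
                 (\<forall>M. row_stochastic n M \<longrightarrow>
                    (\<forall>i<n. \<forall>j<n.
                       mat_pow n M k i j - \<beta> \<le> cc_output n m out M T i j \<and>
                       cc_output n m out M T i j \<le> mat_pow n M k i j))))"
    proof (rule exI[of _ "Emax * T0"], intro conjI allI impI)
    show "real (Emax * T0) \<le> (\<bar>Cm\<bar> * K) * real n powr \<alpha> * (ln (real n)) ^ 1" by (rule Tb)
    fix k :: nat and \<beta> :: real
    assume kb: "(\<exists>e. k = 2 ^ e) \<and> real k \<le> C3 * real n powr c3 \<and> \<beta> \<ge> C4 * real n powr (- c4)"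
    then obtain e where ke: "k = 2^e" and kle: "real k \<le> C3 * real n powr c3"
      and \<beta>: "\<beta> \<ge> C4 * real n powr (- c4)" by blast
    have eE: "e \<le> Emax"
    proof -
      have "log 2 (real k) \<le> log 2 (C3 * real n powr c3)"
        using kle ke assms(4) n0 by (subst log_le_cancel_iff) auto
      then have "real e \<le> log 2 (C3 * real n powr c3)" using ke by (simp add: log_nat_power)
      then show ?thesis unfolding Emax_def by (rule le_nat_floor)
    qed
    define init where "init \<equiv> (\<lambda>(i::nat) (xi::nat \<Rightarrow> real). (\<lambda>j. \<lfloor>xi j * real n ^ c\<rfloor>, \<lambda>j. \<lfloor>xi j * real n ^ c\<rfloor>))"
    define step where "step \<equiv> (\<lambda>(i::nat) (ov::nat \<Rightarrow> int). (\<lambda>j. ov j div int n ^ c, \<lambda>j. ov j div int n ^ c))"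
    show "\<exists>(m :: (nat \<Rightarrow> real) cc_msgf) (out :: (nat \<Rightarrow> real, nat \<Rightarrow> real) cc_outf).
                 cc_bounded (cc_bw b n) m \<and>
                 (\<forall>M. row_stochastic n M \<longrightarrow>
                    (\<forall>i<n. \<forall>j<n.
                       mat_pow n M k i j - \<beta> \<le> cc_output n m out M (Emax * T0) i j \<and>
                       cc_output n m out M (Emax * T0) i j \<le> mat_pow n M k i j))"
    proof (intro exI conjI allI impI)
      show "cc_bounded (cc_bw b n) (cmsg T0 m0 out0 init step)" using bd by (rule cmsg_bounded)
      fix M i j assume M: "row_stochastic n M" and ij: "i < n" "j < n"
      let ?out = "\<lambda>i xi h j. real_of_int (fst (curst T0 out0 init step i xi h e) j) / real n ^ c"
      define Q where "Q \<equiv> (\<lambda>p i j. real_of_int (fst (Ys n T0 m0 out0 init step M p i) j) / real n ^ c)"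
      have oe: "cc_output n (cmsg T0 m0 out0 init step) ?out M (Emax * T0) i j = Q e i j"
        unfolding cc_output_def Q_def using eE by (simp add: curst_H)
      have npos: "n > 0" using n3 by simp
      note AC = algo_correct[OF mm npos M, of e, folded init_def step_def Q_def]
      have AC1: "\<forall>i<n. \<forall>j<n. 0 \<le> Q e i j \<and> Q e i j \<le> mat_pow n M (2^e) i j"
        and AC2: "\<forall>i<n. (\<Sum>j<n. mat_pow n M (2^e) i j - Q e i j) \<le> (2^(e+1) - 1) * real n / real n ^ c"
        using AC by (simp_all add: Q_def)
      show "cc_output n (cmsg T0 m0 out0 init step) ?out M (Emax * T0) i j \<le> mat_pow n M k i j"
        unfolding oe ke using AC1 ij by blast
      have "mat_pow n M (2^e) i j - Q e i j \<le> (\<Sum>j<n. mat_pow n M (2^e) i j - Q e i j)"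
        using AC1 ij by (intro member_le_sum) auto
      also have "\<dots> \<le> (2^(e+1) - 1) * real n / real n ^ c" using AC2 ij by blast
      also have "\<dots> \<le> 2 * real k * real n / real n ^ c"
        using ke by (intro divide_right_mono mult_right_mono) auto
      also have "\<dots> \<le> \<beta>"
        by (rule final_ineq[OF _ nC assms(4) assms(5) creal kle \<beta>]) (use n3 in simp)
      finally show "mat_pow n M k i j - \<beta> \<le> cc_output n (cmsg T0 m0 out0 init step) ?out M (Emax * T0) i j"
        unfolding oe ke by simp
    qed
    qed
  qed
qed


end
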